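(* Let $n\ge2$, $1<p<n$ and $q\ge\frac{2n}{n-1}$. Let $u\in C_0^\infty(\mathbb H^n)$, $f=-\Delta_g u$, and \[ v(t)=\int_t^\infty\frac{s\,f^{**}(s)}{\big(n\sigma_n\sinh^{n-1}(F(s))\big)^2}\,ds,\quad t>0. \] Then \[ \int_0^\infty|v'(t)|^q\big(n\sigma_n\sinh^{n-1}(F(t))\big)^q t^{\frac qp-1}dt\ \ge\ \left(\frac{n-1}{p}\right)^q\int_0^\infty|v(t)|^qt^{\frac qp-1}dt+n^q\sigma_n^{q/n}\int_0^\infty|v'(t)|^qt^{q(\frac1p-\frac1n)+q-1}dt, \] and \begin{align*} \int_0^\infty|v'(t)|^q\big(n\sigma_n\sinh^{n-1}(F(t))\big)^q t^{q(\frac1p-\frac1n)-1}dt\ \ge\ &\left(\frac{(n-1)(n-p)}{np}\right)^q\int_0^\infty|v(t)|^qt^{q(\frac1p-\frac1n)-1}dt\\ &+n^q\sigma_n^{q/n}\int_0^\infty|v'(t)|^qt^{q(\frac1p-\frac2n)+q-1}dt. \end{align*}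
   Context: $\mathbb H^n$ is the hyperbolic space (Poincaré ball model: unit ball $B_n\subset\mathbb R^n$ with metric $g=\left(\frac{2}{1-|x|^2}\right)^2dx\otimes dx$, volume element $dV_g=\left(\frac{2}{1-|x|^2}\right)^ndx$), $\Delta_g$ its Laplace–Beltrami operator. $\sigma_n$ is the Lebesgue volume of the Euclidean unit ball in $\mathbb R^n$. For $r\ge0$, $F(r)$ is the unique $\rho\ge0$ with $r=n\sigma_n\int_0^\rho\sinh^{n-1}(s)\,ds$. For measurable $h$ on $\mathbb H^n$ with $V_g(\{|h|>t\})<\infty$ for all $t>0$: $h^*(t)=\sup\{s>0:V_g(\{|h|>s\})>t\}$ and $h^{**}(t)=\frac1t\int_0^t h^*(s)\,ds$. *)

theory Defs
  imports "HOL-Analysis.Analysis"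
begin

fun iter_partial :: "'a::euclidean_space list \<Rightarrow> ('a \<Rightarrow> real) \<Rightarrow> 'a \<Rightarrow> real" where
  "iter_partial [] f = f"
| "iter_partial (v # vs) f = (\<lambda>x. frechet_derivative (iter_partial vs f) (at x) v)"

definition smooth_on :: "'a::euclidean_space set \<Rightarrow> ('a \<Rightarrow> real) \<Rightarrow> bool" where
  "smooth_on S f \<longleftrightarrow> (\<forall>vs. set vs \<subseteq> Basis \<longrightarrow> iter_partial vs f differentiable_on S)"

text \<open>Poincare ball model: the open unit ball.\<close>
abbreviation hball :: "'a::euclidean_space set" where
  "hball \<equiv> ball 0 1"

definition Cc_infty_hyp :: "('a::euclidean_space \<Rightarrow> real) \<Rightarrow> bool" where
  "Cc_infty_hyp u \<longleftrightarrow> smooth_on hball u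
     \<and> compact (closure {x. u x \<noteq> 0}) \<and> closure {x. u x \<noteq> 0} \<subseteq> hball"

definition eucl_laplacian :: "('a::euclidean_space \<Rightarrow> real) \<Rightarrow> 'a \<Rightarrow> real" where
  "eucl_laplacian u x = (\<Sum>i\<in>Basis. iter_partial [i, i] u x)"

text \<open>Laplace-Beltrami operator of g = (2/(1-|x|^2))^2 dx^2 on the ball, written out:
  Delta_g u = ((1-|x|^2)/2)^2 Delta u + (n-2) (1-|x|^2)/2 <x, grad u>; set to 0 off the ball.\<close>
definition hyp_laplacian :: "('a::euclidean_space \<Rightarrow> real) \<Rightarrow> 'a \<Rightarrow> real" where
  "hyp_laplacian u x =
    (if x \<in> hball then
       ((1 - (norm x)\<^sup>2) / 2)\<^sup>2 * eucl_laplacian u x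
       + (real DIM('a) - 2) * ((1 - (norm x)\<^sup>2) / 2) * (\<Sum>i\<in>Basis. (x \<bullet> i) * iter_partial [i] u x)
     else 0)"

definition hyp_volume :: "'a::euclidean_space measure" where
  "hyp_volume = density lborel
     (\<lambda>x. indicator hball x * ennreal ((2 / (1 - (norm x)\<^sup>2)) ^ DIM('a)))"

definition sigma_n :: "'a::euclidean_space itself \<Rightarrow> real" where
  "sigma_n _ = measure lborel (ball (0::'a) 1)"

definition hypF :: "'a::euclidean_space itself \<Rightarrow> real \<Rightarrow> real" where
  "hypF T r = (THE \<rho>. \<rho> \<ge> 0 \<and>
      r = real DIM('a) * sigma_n T * integral {0..\<rho>} (\<lambda>s. sinh s ^ (DIM('a) - 1)))"

definition rearr :: "('a::euclidean_space \<Rightarrow> real) \<Rightarrow> real \<Rightarrow> real" where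
  "rearr h t = (let S = {s. s > 0 \<and> emeasure hyp_volume {x. \<bar>h x\<bar> > s} > ennreal t}
                in if S = {} then 0 else Sup S)"

definition rearr2 :: "('a::euclidean_space \<Rightarrow> real) \<Rightarrow> real \<Rightarrow> real" where
  "rearr2 h t = (1 / t) * integral {0..t} (rearr h)"

end

theory Submission
  imports Defs
begin

lemma holder_nn:
  fixes M :: "'b measure" and f h :: "'b \<Rightarrow> real" and q B c :: real
  assumes q: "q > 1" and f[measurable]: "f \<in> borel_measurable M" and h[measurable]: "h \<in> borel_measurable M"
    and fnn: "\<And>x. f x \<ge> 0" and hnn: "\<And>x. h x \<ge> 0"
    and B: "(\<integral>\<^sup>+x. ennreal (h x powr (q/(q-1))) \<partial>M) = ennreal B" and Bpos: "B > 0"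
    and c: "ennreal c \<le> (\<integral>\<^sup>+x. ennreal (f x * h x) \<partial>M)" and c0: "c \<ge> 0"
  shows "ennreal (c powr q) \<le> (\<integral>\<^sup>+x. ennreal (f x powr q) \<partial>M) * ennreal (B powr (q-1))"
proof (cases "(\<integral>\<^sup>+x. ennreal (f x powr q) \<partial>M) = \<infinity>")
  case True
  have "B powr (q-1) > 0" using Bpos by simp
  then show ?thesis using True by (simp add: ennreal_mult_top)
next
  case False
  define r where "r = q/(q-1)"
  have r1: "r > 1" using q by (simp add: r_def field_simps)
  have qr: "1/q + 1/r = 1" using q by (simp add: r_def field_simps)
  obtain A where A: "(\<integral>\<^sup>+x. ennreal (f x powr q) \<partial>M) = ennreal A" and A0: "A \<ge> 0"
    using False by (cases "(\<integral>\<^sup>+x. ennreal (f x powr q) \<partial>M)") auto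
  show ?thesis
  proof (cases "A = 0")
    case True
    have "AE x in M. ennreal (f x powr q) = 0"
      using A True by (subst nn_integral_0_iff_AE[symmetric]) auto
    then have "AE x in M. ennreal (f x * h x) = 0"
      by eventually_elim (use fnn in auto)
    then have "(\<integral>\<^sup>+x. ennreal (f x * h x) \<partial>M) = 0"
      by (subst nn_integral_0_iff_AE) auto
    then have "c = 0" using c c0 by simp
    then show ?thesis using q by simp
  next
    case False
    then have Apos: "A > 0" using A0 by simp
    define a where "a = A powr (1/q)"
    define b where "b = B powr (1/r)"
    have apos: "a > 0" and bpos: "b > 0" using Apos Bpos by (auto simp: a_def b_def)
    have aq: "a powr q = A" using Apos q by (simp add: a_def powr_powr)
    have br: "b powr r = B" using Bpos r1 by (simp add: b_def powr_powr)
    have pt: "f x * h x \<le> a * b * ((1/q) * (f x powr q / A) + (1/r) * (h x powr r / B))" for x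
    proof -
      have "(f x / a) * (h x / b) \<le> (f x / a) powr q / q + (h x / b) powr r / r"
        by (rule Youngs_inequality) (use q r1 qr fnn hnn apos bpos in auto)
      also have "(f x / a) powr q = f x powr q / A"
        using fnn apos by (simp add: powr_divide aq)
      also have "(h x / b) powr r = h x powr r / B"
        using hnn bpos by (simp add: powr_divide br)
      finally have "(f x / a) * (h x / b) \<le> f x powr q / A / q + h x powr r / B / r" .
      then have "a * b * ((f x / a) * (h x / b)) \<le> a * b * (f x powr q / A / q + h x powr r / B / r)"
        using apos bpos by (intro mult_left_mono) auto
      then show ?thesis using apos bpos by (simp add: field_simps)
    qed
    have "(\<integral>\<^sup>+x. ennreal (f x * h x) \<partial>M)
        \<le> (\<integral>\<^sup>+x. ennreal (a * b / (q * A)) * ennreal (f x powr q) + ennreal (a * b / (r * B)) * ennreal (h x powr r) \<partial>M)"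
    proof (rule nn_integral_mono)
      fix x
      have "f x * h x \<le> a * b / (q * A) * f x powr q + a * b / (r * B) * h x powr r"
        using pt[of x] by (simp add: field_simps)
      then show "ennreal (f x * h x) \<le> ennreal (a * b / (q * A)) * ennreal (f x powr q) + ennreal (a * b / (r * B)) * ennreal (h x powr r)"
        using apos bpos Apos Bpos q r1
        by (simp add: ennreal_mult[symmetric] ennreal_plus[symmetric] del: ennreal_plus)
    qed
    also have "\<dots> = ennreal (a * b / (q * A)) * ennreal A + ennreal (a * b / (r * B)) * ennreal B"
      by (subst nn_integral_add) (auto simp: nn_integral_cmult A B[unfolded r_def[symmetric]])
    also have "\<dots> = ennreal (a * b)"
      using apos bpos Apos Bpos q r1 qr
      by (simp add: ennreal_mult[symmetric] ennreal_plus[symmetric] field_simps del: ennreal_plus)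
    finally have "ennreal c \<le> ennreal (a * b)" using c by (rule order_trans[rotated])
    then have "c \<le> a * b" using apos bpos by (simp add: ennreal_le_iff)
    then have "c powr q \<le> (a * b) powr q" using c0 q by (intro powr_mono2) auto
    also have "(a * b) powr q = A * B powr (q - 1)"
      using apos bpos q by (simp add: powr_mult aq b_def powr_powr r_def)
    finally show ?thesis using A A0 Bpos by (simp add: ennreal_mult[symmetric])
  qed
qed


lemma nn_powr_tail:
  fixes t k :: real
  assumes "t > 0" "k > 0"
  shows "(\<integral>\<^sup>+s. ennreal (indicator {t..} s * s powr (-(k+1))) \<partial>lborel) = ennreal (t powr (-k) / k)"
proof -
  have "((\<lambda>s. s powr (-(k+1))) has_integral -(t powr (-(k+1)+1)) / (-(k+1)+1)) {t..}"
    by (rule has_integral_powr_to_inf) (use assms in auto)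
  moreover have "-(t powr (-(k+1)+1)) / (-(k+1)+1) = t powr (-k) / k" using assms
    by (simp add: field_simps)
  ultimately have "((\<lambda>s. s powr (-(k+1))) has_integral t powr (-k) / k) {t..}" by simp
  then show ?thesis by (intro nn_integral_has_integral_lebesgue) auto
qed

lemma nn_powr_head:
  fixes s e :: real
  assumes "s > 0" "e > -1"
  shows "(\<integral>\<^sup>+t. ennreal (indicator {0..s} t * t powr e) \<partial>lborel) = ennreal (s powr (e+1) / (e+1))"
  using has_integral_powr_from_0[of e s] assms
  by (intro nn_integral_has_integral_lebesgue) auto

lemma hardy:
  fixes g G :: "real \<Rightarrow> real" and q a :: real
  assumes q: "q > 1" and a: "a > -1" and g[measurable]: "g \<in> borel_measurable borel"
    and gnn: "\<And>s. g s \<ge> 0"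
    and G: "\<And>t. t > 0 \<Longrightarrow> ennreal \<bar>G t\<bar> \<le> (\<integral>\<^sup>+s\<in>{t<..}. ennreal (g s) \<partial>lborel)"
  shows "(\<integral>\<^sup>+t\<in>{0<..}. ennreal (\<bar>G t\<bar> powr q * t powr a) \<partial>lborel)
     \<le> ennreal ((q/(a+1)) powr q) * (\<integral>\<^sup>+t\<in>{0<..}. ennreal (g t powr q * t powr (a+q)) \<partial>lborel)"
proof -
  define \<gamma> where "\<gamma> = (a+1)/q"
  define r where "r = q/(q-1)"
  define \<beta> where "\<beta> = (\<gamma>+1)/r"
  define e where "e = a - \<gamma> * (q-1)"
  have \<gamma>: "\<gamma> > 0" using q a by (simp add: \<gamma>_def)
  have r1: "r > 1" using q by (simp add: r_def field_simps)
  have \<beta>r: "\<beta> * r = \<gamma> + 1" using r1 by (simp add: \<beta>_def)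
  have e1: "e + 1 = \<gamma>" using q by (simp add: e_def \<gamma>_def field_simps)
  have \<beta>q: "\<beta> * q + \<gamma> = a + q" using q by (simp add: \<beta>_def r_def \<gamma>_def field_simps)
  define C where "C = \<gamma> powr (1 - q)"
  have C0: "C \<ge> 0" by (simp add: C_def)
  have pt: "ennreal (\<bar>G t\<bar> powr q * t powr a)
      \<le> (\<integral>\<^sup>+s. ennreal (C * t powr e * (indicator {t..} s * (g s powr q * s powr (\<beta> * q)))) \<partial>lborel)"
    if t: "t > 0" for t
  proof -
    define f where "f = (\<lambda>s. indicator {t..} s * g s * s powr \<beta>)"
    define h where "h = (\<lambda>s. indicator {t..} s * s powr (-\<beta>))"
    have [measurable]: "f \<in> borel_measurable lborel" "h \<in> borel_measurable lborel"
      unfolding f_def h_def by measurable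
    have fh: "f s * h s = indicator {t..} s * g s" for s
      using t by (auto simp: f_def h_def indicator_def powr_minus field_simps)
    have hr: "h s powr (q/(q-1)) = indicator {t..} s * s powr (-(\<gamma>+1))" for s
    proof (cases "t \<le> s")
      case True
      then have "s > 0" using t by simp
      then show ?thesis using True \<beta>r by (simp add: h_def powr_powr r_def[symmetric])
    qed (simp add: h_def)
    have fq: "f s powr q = indicator {t..} s * (g s powr q * s powr (\<beta> * q))" for s
    proof (cases "t \<le> s")
      case True
      then have "s > 0" using t by simp
      then show ?thesis using True gnn[of s] by (simp add: f_def powr_mult powr_powr)
    qed (use q in \<open>simp add: f_def\<close>)
    have B: "(\<integral>\<^sup>+s. ennreal (h s powr (q/(q-1))) \<partial>lborel) = ennreal (t powr (-\<gamma>) / \<gamma>)"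
      unfolding hr by (rule nn_powr_tail) (use t \<gamma> in auto)
    have "ennreal \<bar>G t\<bar> \<le> (\<integral>\<^sup>+s\<in>{t<..}. ennreal (g s) \<partial>lborel)" using G t by simp
    also have "\<dots> \<le> (\<integral>\<^sup>+s. ennreal (f s * h s) \<partial>lborel)"
      unfolding fh by (intro nn_integral_mono) (auto simp: indicator_def)
    finally have c: "ennreal \<bar>G t\<bar> \<le> (\<integral>\<^sup>+s. ennreal (f s * h s) \<partial>lborel)" .
    have H: "ennreal (\<bar>G t\<bar> powr q) \<le> (\<integral>\<^sup>+s. ennreal (f s powr q) \<partial>lborel) * ennreal ((t powr (-\<gamma>) / \<gamma>) powr (q-1))"
      by (rule holder_nn[OF q _ _ _ _ B _ c]) (use t \<gamma> gnn in \<open>auto simp: f_def h_def\<close>)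
    have eq: "t powr a * (t powr (-\<gamma>) / \<gamma>) powr (q-1) = C * t powr e"
      using t \<gamma> by (simp add: C_def e_def powr_divide powr_powr powr_minus_divide powr_diff powr_add powr_mult field_simps)
    have "ennreal (\<bar>G t\<bar> powr q * t powr a) = ennreal (\<bar>G t\<bar> powr q) * ennreal (t powr a)"
      by (simp add: ennreal_mult)
    also have "\<dots> \<le> (\<integral>\<^sup>+s. ennreal (f s powr q) \<partial>lborel) * ennreal ((t powr (-\<gamma>) / \<gamma>) powr (q-1)) * ennreal (t powr a)"
      by (intro mult_right_mono H) auto
    also have "\<dots> = ennreal (C * t powr e) * (\<integral>\<^sup>+s. ennreal (f s powr q) \<partial>lborel)"
      using t \<gamma> by (simp add: eq[symmetric] ennreal_mult mult_ac)
    also have "\<dots> = (\<integral>\<^sup>+s. ennreal (C * t powr e) * ennreal (f s powr q) \<partial>lborel)"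
      by (rule nn_integral_cmult[symmetric]) measurable
    also have "\<dots> = (\<integral>\<^sup>+s. ennreal (C * t powr e * (indicator {t..} s * (g s powr q * s powr (\<beta> * q)))) \<partial>lborel)"
      using C0 by (intro nn_integral_cong) (simp add: fq ennreal_mult)
    finally show ?thesis .
  qed
  define F where "F = (\<lambda>t s. ennreal (indicator {0<..} t * (C * t powr e * (indicator {t..} s * (g s powr q * s powr (\<beta> * q))))))"
  have Fm: "(\<lambda>(t, s). F t s) \<in> borel_measurable (lborel \<Otimes>\<^sub>M lborel)"
  proof -
    have "(\<lambda>(t, s). F t s) = (\<lambda>x. ennreal (indicator {0<..} (fst x) * (C * fst x powr e *
         (of_bool (fst x \<le> snd x) * (g (snd x) powr q * snd x powr (\<beta> * q))))))"
      by (auto simp: F_def indicator_def fun_eq_iff)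
    also have "\<dots> \<in> borel_measurable (lborel \<Otimes>\<^sub>M lborel)" by measurable
    finally show ?thesis .
  qed
  have "(\<integral>\<^sup>+t\<in>{0<..}. ennreal (\<bar>G t\<bar> powr q * t powr a) \<partial>lborel) \<le> (\<integral>\<^sup>+t. (\<integral>\<^sup>+s. F t s \<partial>lborel) \<partial>lborel)"
  proof (rule nn_integral_mono)
    fix t :: real
    show "ennreal (\<bar>G t\<bar> powr q * t powr a) * indicator {0<..} t \<le> (\<integral>\<^sup>+s. F t s \<partial>lborel)"
    proof (cases "t > 0")
      case True
      then show ?thesis using pt[OF True] by (simp add: F_def)
    qed (simp add: F_def)
  qed
  also have "\<dots> = (\<integral>\<^sup>+s. (\<integral>\<^sup>+t. F t s \<partial>lborel) \<partial>lborel)"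
    by (rule lborel_pair.Fubini'[OF Fm, symmetric])
  also have "\<dots> = (\<integral>\<^sup>+s. ennreal (\<gamma> powr (-q)) * (ennreal (g s powr q * s powr (a+q)) * indicator {0<..} s) \<partial>lborel)"
  proof (rule nn_integral_cong)
    fix s :: real
    show "(\<integral>\<^sup>+t. F t s \<partial>lborel) = ennreal (\<gamma> powr (-q)) * (ennreal (g s powr q * s powr (a+q)) * indicator {0<..} s)"
    proof (cases "s > 0")
      case False
      then have "F t s = 0" for t by (auto simp: F_def indicator_def)
      then show ?thesis using False by simp
    next
      case True
      let ?K = "C * (g s powr q * s powr (\<beta> * q))"
      have "F t s = ennreal ?K * ennreal (indicator {0..s} t * t powr e)" for t
        using C0 by (auto simp: F_def indicator_def ennreal_mult[symmetric] mult_ac)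
      then have "(\<integral>\<^sup>+t. F t s \<partial>lborel) = (\<integral>\<^sup>+t. ennreal ?K * ennreal (indicator {0..s} t * t powr e) \<partial>lborel)"
        by simp
      also have "\<dots> = ennreal ?K * ennreal (s powr (e+1) / (e+1))"
        using nn_powr_head[of s e] True e1 \<gamma> by (subst nn_integral_cmult) auto
      also have "\<dots> = ennreal (\<gamma> powr (-q)) * ennreal (g s powr q * s powr (a+q))"
      proof -
        have "?K * (s powr (e+1) / (e+1)) = \<gamma> powr (-q) * (g s powr q * s powr (a+q))"
          using True \<gamma> unfolding e1 C_def \<beta>q[symmetric]
          by (simp add: powr_add powr_diff powr_minus field_simps)
        moreover have "?K \<ge> 0" using C0 by simp
        moreover have "s powr (e+1) / (e+1) \<ge> 0" using e1 \<gamma> by simp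
        ultimately show ?thesis by (simp add: ennreal_mult[symmetric])
      qed
      finally show ?thesis using True by simp
    qed
  qed
  also have "\<dots> = ennreal (\<gamma> powr (-q)) * (\<integral>\<^sup>+s\<in>{0<..}. ennreal (g s powr q * s powr (a+q)) \<partial>lborel)"
    by (rule nn_integral_cmult) measurable
  also have "\<gamma> powr (-q) = (q/(a+1)) powr q"
    using \<gamma> q a by (simp add: \<gamma>_def powr_minus_divide powr_divide)
  finally show ?thesis .
qed


definition Phi :: "nat \<Rightarrow> real \<Rightarrow> real" where
  "Phi N \<rho> = integral {0..\<rho>} (\<lambda>s. sinh s ^ (N - 1))"

lemma Phi_deriv: "x > 0 \<Longrightarrow> (Phi N has_real_derivative sinh x ^ (N - 1)) (at x)"
proof -
  assume x: "x > 0"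
  have "((\<lambda>y. integral {0..y} (\<lambda>s. sinh s ^ (N - 1))) has_real_derivative sinh x ^ (N - 1)) (at x within {0..x+1})"
    by (rule integral_has_real_derivative) (use x in \<open>auto intro!: continuous_intros\<close>)
  moreover have "at x within {0..x+1} = at x" using x by (intro at_within_Icc_at) auto
  ultimately show ?thesis by (simp add: Phi_def[abs_def])
qed

lemma Phi_cont: "continuous_on {0..b} (Phi N)"
  unfolding Phi_def[abs_def]
  by (rule indefinite_integral_continuous_1) (auto intro!: integrable_continuous_real continuous_intros)

lemma Phi_0[simp]: "Phi N 0 = 0" by (simp add: Phi_def)

lemma Phi_pos: assumes "\<rho> > 0" shows "Phi N \<rho> > 0"
proof -
  have "Phi N 0 < Phi N \<rho>"
    by (rule DERIV_pos_imp_increasing_open[OF assms _ Phi_cont])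
       (use Phi_deriv in \<open>auto intro!: exI\<close>)
  then show ?thesis by simp
qed

lemma Phi_nonneg: assumes "\<rho> \<ge> 0" shows "Phi N \<rho> \<ge> 0"
  using Phi_pos[of \<rho> N] assms by (cases "\<rho> = 0") auto

lemma Phi_strict_mono: assumes "0 \<le> x" "x < y" shows "Phi N x < Phi N y"
proof (rule DERIV_pos_imp_increasing_open[OF assms(2)])
  fix z assume z: "x < z" "z < y"
  then have "z > 0" using assms by simp
  then show "\<exists>d. (Phi N has_real_derivative d) (at z) \<and> d > 0"
    using Phi_deriv[of z N] by (intro exI[of _ "sinh z ^ (N - 1)"]) auto
qed (use assms in \<open>auto intro!: continuous_on_subset[OF Phi_cont[of "y" N]]\<close>)

lemma step1:
  assumes N: "N \<ge> 2" and \<rho>: "\<rho> \<ge> 0"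
  shows "(N - 1) * Phi N \<rho> \<le> sinh \<rho> ^ (N - 1)"
proof -
  let ?k = "\<lambda>x. sinh x ^ (N - 1) - (N - 1) * Phi N x"
  have "?k 0 \<le> ?k \<rho>"
  proof (rule DERIV_nonneg_imp_increasing_open[OF \<rho>])
    fix x :: real assume x: "0 < x" "x < \<rho>"
    have d: "(?k has_real_derivative (N - 1) * sinh x ^ (N - 2) * cosh x - (N - 1) * sinh x ^ (N - 1)) (at x)"
      using N by (auto intro!: derivative_eq_intros Phi_deriv x simp: numeral_2_eq_2 Suc_diff_Suc)
    have "sinh x ^ (N - 1) = sinh x ^ (N - 2) * sinh x"
      using N by (metis Suc_diff_Suc Suc_1 Suc_le_lessD diff_Suc_1 power_Suc2)
    also have "\<dots> \<le> sinh x ^ (N - 2) * cosh x"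
      using x by (intro mult_left_mono sinh_le_cosh_real) auto
    finally have "(N - 1) * sinh x ^ (N - 1) \<le> (N - 1) * (sinh x ^ (N - 2) * cosh x)"
      by (intro mult_left_mono) auto
    then show "\<exists>y. (?k has_real_derivative y) (at x) \<and> 0 \<le> y"
      using d by (intro exI[of _ "(N - 1) * sinh x ^ (N - 2) * cosh x - (N - 1) * sinh x ^ (N - 1)"]) (auto simp: mult_ac)
  next
    show "continuous_on {0..\<rho>} ?k" by (intro continuous_intros Phi_cont)
  qed
  moreover have "(0::real) ^ (N - 1) = 0" using N by (intro zero_power) simp
  ultimately show ?thesis using N by (auto simp add: of_nat_diff power_0_left split: if_splits)
qed

lemma step2:
  assumes N: "N \<ge> 2" and \<rho>: "\<rho> \<ge> 0"
  shows "((real N - 1) * Phi N \<rho>) powr ((real N + 1) / (real N - 1)) + N * Phi N \<rho> \<le> sinh \<rho> ^ N * cosh \<rho>"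
proof -
  obtain m where m: "N = Suc m" "m \<ge> 1" using N by (cases N) auto
  define e where "e = (real m + 2) / real m"
  have e1: "e - 1 = 2 / real m" using m by (simp add: e_def field_simps)
  have em: "e * real m = real m + 2" using m by (simp add: e_def)
  let ?Y = "\<lambda>x. real m * Phi N x"
  let ?k = "\<lambda>x. sinh x ^ Suc m * cosh x - ?Y x powr e - real (Suc m) * Phi N x"
  have "?k 0 \<le> ?k \<rho>"
  proof (rule DERIV_nonneg_imp_increasing_open[OF \<rho>])
    fix x :: real assume x: "0 < x" "x < \<rho>"
    have Ypos: "?Y x > 0" using x m Phi_pos[of x N] by simp
    have dP: "(Phi N has_real_derivative sinh x ^ m) (at x)" using Phi_deriv[OF x(1), of N] m by simp
    define D where "D = real (Suc m) * sinh x ^ m * cosh x * cosh x + sinh x ^ Suc m * sinh x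
        - e * ?Y x powr (e - 1) * (real m * sinh x ^ m) - real (Suc m) * sinh x ^ m"
    have pm: "sinh x ^ (m - Suc 0) * sinh x = sinh x ^ m"
      using m by (metis Suc_pred' less_eq_Suc_le power_Suc2 One_nat_def)
    have d: "(?k has_real_derivative D) (at x)"
    proof -
      have A: "((\<lambda>x. sinh x ^ Suc m * cosh x) has_real_derivative real (Suc m) * sinh x ^ m * cosh x * cosh x + sinh x ^ Suc m * sinh x) (at x)"
      proof -
        show ?thesis
          apply (rule derivative_eq_intros refl | simp)+
          done
      qed
      have dY: "(?Y has_real_derivative real m * sinh x ^ m) (at x)"
        by (intro DERIV_cmult dP)
      have B: "((\<lambda>x. ?Y x powr e) has_real_derivative e * ?Y x powr (e - 1) * (real m * sinh x ^ m)) (at x)"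
        using DERIV_fun_powr[OF dY Ypos, of e] by simp
      have C: "((\<lambda>x. real (Suc m) * Phi N x) has_real_derivative real (Suc m) * sinh x ^ m) (at x)"
        by (intro DERIV_cmult dP)
      show ?thesis unfolding D_def by (intro DERIV_diff A B C)
    qed
    have s: "sinh x > 0" using x by simp
    have "?Y x \<le> sinh x ^ m" using step1[OF N, of x] x m by simp
    then have "?Y x powr (2 / real m) \<le> (sinh x ^ m) powr (2 / real m)"
      using Ypos m by (intro powr_mono2) auto
    also have "(sinh x ^ m) powr (2 / real m) = sinh x ^ 2"
    proof -
      have "sinh x ^ m = sinh x powr (real m)" using s by (simp add: powr_realpow)
      then have "(sinh x ^ m) powr (2 / real m) = sinh x powr (real m * (2 / real m))"
        by (simp add: powr_powr)
      also have "\<dots> = sinh x powr 2" using m by simp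
      also have "\<dots> = sinh x ^ 2" using s by (simp add: powr_numeral)
      finally show ?thesis .
    qed
    finally have Yle: "?Y x powr (e - 1) \<le> sinh x ^ 2" by (simp add: e1)
    have "D = (real m + 2) * sinh x ^ m * (sinh x ^ 2 - ?Y x powr (e - 1))"
    proof -
      have cc: "cosh x * cosh x = sinh x ^ 2 + 1" using cosh_square_eq[of x] by (simp add: power2_eq_square)
      have "D = real (Suc m) * sinh x ^ m * (cosh x * cosh x) + sinh x ^ m * sinh x ^ 2
          - (e * real m) * ?Y x powr (e - 1) * sinh x ^ m - real (Suc m) * sinh x ^ m"
        unfolding D_def by (simp add: power2_eq_square mult_ac)
      also have "\<dots> = real (Suc m) * sinh x ^ m * (sinh x ^ 2 + 1) + sinh x ^ m * sinh x ^ 2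
          - (real m + 2) * ?Y x powr (e - 1) * sinh x ^ m - real (Suc m) * sinh x ^ m"
        by (simp only: cc em)
      also have "\<dots> = (real m + 2) * sinh x ^ m * (sinh x ^ 2 - ?Y x powr (e - 1))"
        by (simp add: algebra_simps)
      finally show ?thesis .
    qed
    also have "\<dots> \<ge> 0" using Yle s by (intro mult_nonneg_nonneg) auto
    finally show "\<exists>y. (?k has_real_derivative y) (at x) \<and> 0 \<le> y" using d by blast
  next
    have cY: "continuous_on {0..\<rho>} (\<lambda>x. ?Y x powr e)"
      by (rule continuous_on_powr') (use m Phi_nonneg in \<open>auto intro!: continuous_intros Phi_cont simp: e_def\<close>)
    show "continuous_on {0..\<rho>} ?k"
      by (intro continuous_on_diff[OF continuous_on_diff[OF _ cY]] continuous_intros Phi_cont)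
  qed
  moreover have "e = (real N + 1) / (real N - 1)" using m by (simp add: e_def)
  ultimately show ?thesis using m by simp
qed

lemma step3:
  assumes N: "N \<ge> 2" and \<rho>: "\<rho> \<ge> 0"
  shows "((real N - 1) * Phi N \<rho>) powr (2 * real N / (real N - 1)) + (N * Phi N \<rho>)\<^sup>2 \<le> sinh \<rho> ^ (2 * N)"
proof -
  obtain m where m: "N = Suc m" "m \<ge> 1" using N by (cases N) auto
  define k where "k = (2 * real m + 2) / real m"
  define e where "e = (real m + 2) / real m"
  have k1: "k - 1 = e" using m by (simp add: k_def e_def field_simps)
  have km: "k * real m = 2 * real m + 2" using m by (simp add: k_def)
  let ?Y = "\<lambda>x. real m * Phi N x"
  let ?k = "\<lambda>x. sinh x ^ (2 * Suc m) - ?Y x powr k - (real (Suc m) * Phi N x)\<^sup>2"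
  have "?k 0 \<le> ?k \<rho>"
  proof (rule DERIV_nonneg_imp_increasing_open[OF \<rho>])
    fix x :: real assume x: "0 < x" "x < \<rho>"
    have Ypos: "?Y x > 0" using x m Phi_pos[of x N] by simp
    have dP: "(Phi N has_real_derivative sinh x ^ m) (at x)" using Phi_deriv[OF x(1), of N] m by simp
    define D where "D = real (2 * Suc m) * sinh x ^ (2 * m + 1) * cosh x
        - k * ?Y x powr (k - 1) * (real m * sinh x ^ m) - 2 * (real (Suc m) * Phi N x) * (real (Suc m) * sinh x ^ m)"
    have d: "(?k has_real_derivative D) (at x)"
    proof -
      have A: "((\<lambda>x. sinh x ^ (2 * Suc m)) has_real_derivative real (2 * Suc m) * sinh x ^ (2 * m + 1) * cosh x) (at x)"
        apply (rule derivative_eq_intros refl | simp)+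
        done
      have dY: "(?Y has_real_derivative real m * sinh x ^ m) (at x)"
        by (intro DERIV_cmult dP)
      have B: "((\<lambda>x. ?Y x powr k) has_real_derivative k * ?Y x powr (k - 1) * (real m * sinh x ^ m)) (at x)"
        using DERIV_fun_powr[OF dY Ypos, of k] by simp
      have C0: "((\<lambda>x. real (Suc m) * Phi N x) has_real_derivative real (Suc m) * sinh x ^ m) (at x)"
        by (intro DERIV_cmult dP)
      have C: "((\<lambda>x. (real (Suc m) * Phi N x)\<^sup>2) has_real_derivative 2 * (real (Suc m) * Phi N x) * (real (Suc m) * sinh x ^ m)) (at x)"
        by (rule DERIV_cong[OF DERIV_power[OF C0, of 2]]) (simp add: algebra_simps)
      show ?thesis unfolding D_def by (intro DERIV_diff A B C)
    qed
    have st2: "?Y x powr e + real (Suc m) * Phi N x \<le> sinh x ^ Suc m * cosh x"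
      using step2[OF N, of x] x m by (simp add: e_def add_ac)
    have "D = 2 * real (Suc m) * sinh x ^ m * (sinh x ^ Suc m * cosh x - (?Y x powr e + real (Suc m) * Phi N x))"
    proof -
      have "D = 2 * real (Suc m) * sinh x ^ m * (sinh x ^ Suc m * cosh x) - (k * real m) * ?Y x powr e * sinh x ^ m
          - 2 * real (Suc m) * sinh x ^ m * (real (Suc m) * Phi N x)"
      proof -
        have "2 * m + 1 = m + Suc m" by simp
        then have pw: "sinh x ^ (2 * m + 1) = sinh x ^ m * sinh x ^ Suc m" by (simp only: power_add)
        show ?thesis unfolding D_def k1 pw by (simp add: mult_ac)
      qed
      also have "\<dots> = 2 * real (Suc m) * sinh x ^ m * (sinh x ^ Suc m * cosh x) - (2 * real m + 2) * ?Y x powr e * sinh x ^ m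
          - 2 * real (Suc m) * sinh x ^ m * (real (Suc m) * Phi N x)"
        by (simp only: km)
      also have "\<dots> = 2 * real (Suc m) * sinh x ^ m * (sinh x ^ Suc m * cosh x - (?Y x powr e + real (Suc m) * Phi N x))"
        by (simp add: algebra_simps)
      finally show ?thesis .
    qed
    also have "\<dots> \<ge> 0" using st2 x by (intro mult_nonneg_nonneg) auto
    finally show "\<exists>y. (?k has_real_derivative y) (at x) \<and> 0 \<le> y" using d by blast
  next
    have cY: "continuous_on {0..\<rho>} (\<lambda>x. ?Y x powr k)"
      by (rule continuous_on_powr') (use m Phi_nonneg in \<open>auto intro!: continuous_intros Phi_cont simp: k_def\<close>)
    show "continuous_on {0..\<rho>} ?k"
      by (intro continuous_on_diff[OF continuous_on_diff[OF _ cY]] continuous_intros Phi_cont)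
  qed
  moreover have "k = 2 * real N / (real N - 1)" using m by (simp add: k_def field_simps)
  moreover have "0 powr k = 0" using m by (simp add: k_def)
  ultimately show ?thesis using m by simp
qed

lemma powr_superadd:
  fixes a b r :: real
  assumes "a \<ge> 0" "b \<ge> 0" "r \<ge> 1"
  shows "a powr r + b powr r \<le> (a + b) powr r"
proof (cases "a + b = 0")
  case True
  then have "a = 0" "b = 0" using assms by auto
  then show ?thesis using assms by simp
next
  case False
  then have s: "a + b > 0" using assms by simp
  have "(a / (a+b)) powr r \<le> (a / (a+b)) powr 1"
    using assms s by (intro powr_mono') (auto simp: field_simps)
  moreover have "(b / (a+b)) powr r \<le> (b / (a+b)) powr 1"
    using assms s by (intro powr_mono') (auto simp: field_simps)
  ultimately have "(a / (a+b)) powr r + (b / (a+b)) powr r \<le> a / (a+b) + b / (a+b)"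
    using assms s by simp
  also have "\<dots> = 1" using s by (metis add_divide_distrib divide_self less_irrefl)
  finally have "(a powr r + b powr r) / (a+b) powr r \<le> 1"
    using assms s by (simp add: powr_divide add_divide_distrib)
  moreover have "(a+b) powr r > 0" using s by simp
  ultimately show ?thesis by (simp add: divide_le_eq)
qed

lemma geom_main:
  assumes N: "N \<ge> 2" and \<rho>: "\<rho> \<ge> 0" and q: "q \<ge> 2 * real N / (real N - 1)"
  shows "((real N - 1) * Phi N \<rho>) powr q + (N * Phi N \<rho>) powr (q * (real N - 1) / real N)
         \<le> (sinh \<rho> ^ (N - 1)) powr q"
proof (cases "\<rho> = 0")
  case True
  then show ?thesis by simp
next
  case False
  then have \<rho>0: "\<rho> > 0" using \<rho> by simp
  have N1: "real N - 1 > 0" using N by simp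
  define k where "k = 2 * real N / (real N - 1)"
  have k0: "k > 0" using N1 N by (simp add: k_def)
  define r where "r = q / k"
  have r1: "r \<ge> 1" using q k0 by (simp add: r_def k_def[symmetric])
  have P: "Phi N \<rho> > 0" using Phi_pos[OF \<rho>0] .
  have s: "sinh \<rho> > 0" using \<rho>0 by simp
  let ?Y = "(real N - 1) * Phi N \<rho>"
  let ?Z = "(N * Phi N \<rho>)\<^sup>2"
  have Y0: "?Y > 0" using N1 P by simp
  have Z0: "?Z \<ge> 0" by simp
  have st3: "?Y powr k + ?Z \<le> sinh \<rho> ^ (2 * N)" using step3[OF N \<rho>] by (simp add: k_def)
  have "?Y powr q + (N * Phi N \<rho>) powr (q * (real N - 1) / real N) = (?Y powr k) powr r + ?Z powr r"
  proof -
    have "(?Y powr k) powr r = ?Y powr q" using k0 by (simp add: powr_powr r_def)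
    moreover have "?Z powr r = (N * Phi N \<rho>) powr (q * (real N - 1) / real N)"
    proof -
      have "?Z = (N * Phi N \<rho>) powr 2" using P N by (simp add: powr_numeral)
      then have "?Z powr r = (N * Phi N \<rho>) powr (2 * r)" by (simp add: powr_powr)
      moreover have "2 * r = q * (real N - 1) / real N" using N1 N by (simp add: r_def k_def field_simps)
      ultimately show ?thesis by simp
    qed
    ultimately show ?thesis by simp
  qed
  also have "\<dots> \<le> (?Y powr k + ?Z) powr r"
    by (rule powr_superadd) (use r1 in auto)
  also have "\<dots> \<le> (sinh \<rho> ^ (2 * N)) powr r"
    by (rule powr_mono2) (use r1 st3 Y0 in auto)
  also have "\<dots> = (sinh \<rho> ^ (N - 1)) powr q"
  proof -
    have "(sinh \<rho> ^ (2 * N)) powr r = sinh \<rho> powr (real (2 * N) * r)"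
      using s by (simp add: powr_realpow[symmetric] powr_powr del: of_nat_mult)
    also have "real (2 * N) * r = real (N - 1) * q" using N1 N k0 by (simp add: r_def k_def of_nat_diff field_simps)
    also have "sinh \<rho> powr (real (N - 1) * q) = (sinh \<rho> ^ (N - 1)) powr q"
      using s by (simp add: powr_realpow[symmetric] powr_powr)
    finally show ?thesis .
  qed
  finally show ?thesis .
qed


definition Finv :: "nat \<Rightarrow> real \<Rightarrow> real \<Rightarrow> real" where
  "Finv N \<sigma> r = (THE \<rho>. \<rho> \<ge> 0 \<and> r = real N * \<sigma> * Phi N \<rho>)"

lemma Phi_lower:
  assumes N: "N \<ge> 2" and \<rho>: "\<rho> \<ge> 1"
  shows "Phi N \<rho> \<ge> (\<rho> - 1) * sinh 1 ^ (N - 1)"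
proof -
  let ?k = "\<lambda>x. Phi N x - (x - 1) * sinh 1 ^ (N - 1)"
  have "?k 1 \<le> ?k \<rho>"
  proof (rule DERIV_nonneg_imp_increasing_open[OF \<rho>])
    fix x :: real assume x: "1 < x" "x < \<rho>"
    have "((\<lambda>x. Phi N x - (x - 1) * sinh 1 ^ (N - 1)) has_real_derivative sinh x ^ (N - 1) - 1 * sinh 1 ^ (N - 1)) (at x)"
    proof -
      have dP: "(Phi N has_real_derivative sinh x ^ (N - 1)) (at x)" 
      proof -
        have "x > 0" using x by simp
        from Phi_deriv[OF this, of N] show ?thesis by simp
      qed
      show ?thesis by (intro derivative_eq_intros dP) (use dP in auto)
    qed
    moreover have "sinh 1 ^ (N - 1) \<le> sinh x ^ (N - 1)"
      using x by (intro power_mono) auto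
    ultimately show "\<exists>y. (?k has_real_derivative y) (at x) \<and> 0 \<le> y" by force
  next
    show "continuous_on {1..\<rho>} ?k"
      by (intro continuous_intros continuous_on_subset[OF Phi_cont[of \<rho> N]]) auto
  qed
  moreover have "Phi N 1 \<ge> 0" by (rule Phi_nonneg) simp
  ultimately show ?thesis by simp
qed

lemma Finv_props:
  assumes N: "N \<ge> 2" and \<sigma>: "\<sigma> > 0" and t: "t \<ge> 0"
  shows "Finv N \<sigma> t \<ge> 0" "real N * \<sigma> * Phi N (Finv N \<sigma> t) = t"
proof -
  let ?G = "\<lambda>\<rho>. real N * \<sigma> * Phi N \<rho>"
  have c: "real N * \<sigma> > 0" using N \<sigma> by simp
  define b where "b = 1 + t / (real N * \<sigma> * sinh (1::real) ^ (N - 1))"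
  have s1: "sinh (1::real) ^ (N - 1) > 0" by simp
  have b1: "b \<ge> 1" using t c s1 by (simp add: b_def)
  have "?G b \<ge> real N * \<sigma> * ((b - 1) * sinh 1 ^ (N - 1))"
    using Phi_lower[OF N b1] c by (intro mult_left_mono) auto
  also have "real N * \<sigma> * ((b - 1) * sinh 1 ^ (N - 1)) = t"
    using c s1 N \<sigma> by (simp add: b_def field_simps)
  finally have Gb: "?G b \<ge> t" .
  have "\<exists>\<rho>\<ge>0. \<rho> \<le> b \<and> ?G \<rho> = t"
    by (rule IVT') (use Gb t b1 in \<open>auto intro!: continuous_intros Phi_cont\<close>)
  then obtain \<rho> where \<rho>: "\<rho> \<ge> 0" "?G \<rho> = t" by auto
  have uniq: "\<rho>' = \<rho>" if "\<rho>' \<ge> 0" "?G \<rho>' = t" for \<rho>'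
  proof (rule ccontr)
    assume "\<rho>' \<noteq> \<rho>"
    have "real N * \<sigma> * Phi N \<rho>' = real N * \<sigma> * Phi N \<rho>" using that(2) \<rho>(2) by simp
    then have eqP: "Phi N \<rho>' = Phi N \<rho>" using c N \<sigma> by simp
    from \<open>\<rho>' \<noteq> \<rho>\<close> consider "\<rho>' < \<rho>" | "\<rho> < \<rho>'" by linarith
    then show False
    proof cases
      case 1 then have "Phi N \<rho>' < Phi N \<rho>" using that by (intro Phi_strict_mono) auto
      then show False using eqP by simp
    next
      case 2 then have "Phi N \<rho> < Phi N \<rho>'" using \<rho> by (intro Phi_strict_mono) auto
      then show False using eqP by simp
    qed
  qed
  have "Finv N \<sigma> t = \<rho>"
    unfolding Finv_def
  proof (rule the_equality)
    show "\<rho> \<ge> 0 \<and> t = real N * \<sigma> * Phi N \<rho>" using \<rho> by simp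
    fix \<rho>' assume "\<rho>' \<ge> 0 \<and> t = real N * \<sigma> * Phi N \<rho>'"
    then show "\<rho>' = \<rho>" using uniq[of \<rho>'] by simp
  qed
  then show "Finv N \<sigma> t \<ge> 0" "real N * \<sigma> * Phi N (Finv N \<sigma> t) = t" using \<rho> by auto
qed

lemma Finv_G:
  assumes N: "N \<ge> 2" and \<sigma>: "\<sigma> > 0" and \<rho>: "\<rho> \<ge> 0"
  shows "Finv N \<sigma> (real N * \<sigma> * Phi N \<rho>) = \<rho>"
proof -
  let ?t = "real N * \<sigma> * Phi N \<rho>"
  have t0: "?t \<ge> 0" using N \<sigma> Phi_nonneg[OF \<rho>] by simp
  note F = Finv_props[OF N \<sigma> t0]
  have c: "real N * \<sigma> > 0" using N \<sigma> by simp
  have eqP: "Phi N (Finv N \<sigma> ?t) = Phi N \<rho>" using F(2) c N \<sigma> by simp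
  show ?thesis
  proof (rule ccontr)
    assume ne: "Finv N \<sigma> ?t \<noteq> \<rho>"
    then consider "Finv N \<sigma> ?t < \<rho>" | "\<rho> < Finv N \<sigma> ?t" by linarith
    then show False
    proof cases
      case 1 then have "Phi N (Finv N \<sigma> ?t) < Phi N \<rho>" using F by (intro Phi_strict_mono) auto
      then show False using eqP by simp
    next
      case 2 then have "Phi N \<rho> < Phi N (Finv N \<sigma> ?t)" using \<rho> by (intro Phi_strict_mono) auto
      then show False using eqP by simp
    qed
  qed
qed

lemma Finv_pos:
  assumes N: "N \<ge> 2" and \<sigma>: "\<sigma> > 0" and t: "t > 0"
  shows "Finv N \<sigma> t > 0"
proof -
  note F = Finv_props[OF N \<sigma> less_imp_le[OF t]]
  show ?thesis
  proof (rule ccontr)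
    assume "\<not> Finv N \<sigma> t > 0"
    then have "Finv N \<sigma> t = 0" using F by simp
    then show False using F t by simp
  qed
qed

lemma Finv_cont:
  assumes N: "N \<ge> 2" and \<sigma>: "\<sigma> > 0" and t: "t > 0"
  shows "isCont (Finv N \<sigma>) t"
proof -
  let ?G = "\<lambda>\<rho>. real N * \<sigma> * Phi N \<rho>"
  define x where "x = Finv N \<sigma> t"
  have x0: "x > 0" using Finv_pos[OF N \<sigma> t] by (simp add: x_def)
  have Gx: "?G x = t" using Finv_props[OF N \<sigma> less_imp_le[OF t]] by (simp add: x_def)
  have "isCont (Finv N \<sigma>) (?G x)"
  proof (rule isCont_inverse_function2[of "x/2" x "x+1"])
    show "x / 2 < x" "x < x + 1" using x0 by auto
    fix z assume z: "x / 2 \<le> z" "z \<le> x + 1"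
    then have z0: "z > 0" using x0 by simp
    show "Finv N \<sigma> (?G z) = z" using Finv_G[OF N \<sigma>] z0 by simp
    show "isCont ?G z" using Phi_deriv[OF z0, of N] by (intro continuous_intros DERIV_isCont)
  qed
  then show ?thesis using Gx by simp
qed


lemma w_ineq:
  assumes N: "N \<ge> 2" and \<sigma>: "\<sigma> > 0" and t: "t > 0" and q: "q \<ge> 2 * real N / (real N - 1)"
  shows "((real N - 1) * t) powr q + real N powr q * \<sigma> powr (q / real N) * t powr (q * (real N - 1) / real N)
     \<le> (real N * \<sigma> * sinh (Finv N \<sigma> t) ^ (N - 1)) powr q"
proof -
  define \<rho> where "\<rho> = Finv N \<sigma> t"
  have \<rho>0: "\<rho> \<ge> 0" and t\<rho>: "real N * \<sigma> * Phi N \<rho> = t"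
    using Finv_props[OF N \<sigma> less_imp_le[OF t]] by (auto simp: \<rho>_def)
  have P0: "Phi N \<rho> \<ge> 0" using Phi_nonneg[OF \<rho>0] .
  have N0: "real N > 0" using N by simp
  define c where "c = q * (real N - 1) / real N"
  define S where "S = sinh \<rho> ^ (N - 1)"
  have S0: "S \<ge> 0" using \<rho>0 by (simp add: S_def)
  have G: "((real N - 1) * Phi N \<rho>) powr q + (real N * Phi N \<rho>) powr c \<le> S powr q"
    using geom_main[OF N \<rho>0 q] by (simp add: c_def S_def)
  have k0: "(real N * \<sigma>) powr q > 0" using N0 \<sigma> by simp
  have "(real N * \<sigma>) powr q * (((real N - 1) * Phi N \<rho>) powr q + (real N * Phi N \<rho>) powr c)
      \<le> (real N * \<sigma>) powr q * S powr q"
    using G k0 by (intro mult_left_mono) auto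
  moreover have "(real N * \<sigma>) powr q * ((real N - 1) * Phi N \<rho>) powr q = ((real N - 1) * t) powr q"
  proof -
    have "(real N * \<sigma>) powr q * ((real N - 1) * Phi N \<rho>) powr q = (real N * \<sigma> * ((real N - 1) * Phi N \<rho>)) powr q"
      using N0 \<sigma> P0 N by (subst powr_mult) auto
    also have "real N * \<sigma> * ((real N - 1) * Phi N \<rho>) = (real N - 1) * t" using t\<rho> by (simp add: algebra_simps)
    finally show ?thesis .
  qed
  moreover have "(real N * \<sigma>) powr q * (real N * Phi N \<rho>) powr c
      = real N powr q * \<sigma> powr (q / real N) * t powr c"
  proof -
    have tc: "t powr c = (real N * Phi N \<rho>) powr c * \<sigma> powr c"
    proof -
      have "t = (real N * Phi N \<rho>) * \<sigma>" using t\<rho> by (simp add: algebra_simps)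
      then show ?thesis using N0 P0 \<sigma> by (simp add: powr_mult)
    qed
    have qc: "q / real N = q - c" using N0 by (simp add: c_def field_simps)
    have "real N powr q * \<sigma> powr (q / real N) * t powr c
        = real N powr q * (\<sigma> powr q / \<sigma> powr c) * ((real N * Phi N \<rho>) powr c * \<sigma> powr c)"
      unfolding tc qc using \<sigma> by (simp add: powr_diff)
    also have "\<dots> = real N powr q * \<sigma> powr q * (real N * Phi N \<rho>) powr c"
      using \<sigma> by (simp add: field_simps)
    also have "\<dots> = (real N * \<sigma>) powr q * (real N * Phi N \<rho>) powr c"
      using N0 \<sigma> by (simp add: powr_mult)
    finally show ?thesis by simp
  qed
  moreover have "(real N * \<sigma>) powr q * S powr q = (real N * \<sigma> * S) powr q"
    using N0 \<sigma> S0 by (simp add: powr_mult)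
  ultimately show ?thesis by (simp add: distrib_left c_def S_def \<rho>_def)
qed

lemma assemble:
  fixes D G gg W :: "real \<Rightarrow> real" and a b q c1 c2 H P :: real
  assumes g0m[measurable]: "gg \<in> borel_measurable borel" and g0nn: "\<And>s. gg s \<ge> 0"
    and D: "\<And>t. t > 0 \<Longrightarrow> \<bar>D t\<bar> = gg t"
    and hardy: "(\<integral>\<^sup>+t\<in>{0<..}. ennreal (\<bar>G t\<bar> powr q * t powr a) \<partial>lborel)
        \<le> ennreal H * (\<integral>\<^sup>+t\<in>{0<..}. ennreal (gg t powr q * t powr (a+q)) \<partial>lborel)"
    and c1: "c1 \<ge> 0" and H: "H \<ge> 0" and P: "c1 * H = P" and c2: "c2 \<ge> 0"
    and W: "\<And>t. t > 0 \<Longrightarrow> P * t powr (a+q) + c2 * t powr b \<le> W t powr q * t powr a"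
  shows "ennreal c1 * (\<integral>\<^sup>+t\<in>{0<..}. ennreal (\<bar>G t\<bar> powr q * t powr a) \<partial>lborel)
         + ennreal c2 * (\<integral>\<^sup>+t\<in>{0<..}. ennreal (\<bar>D t\<bar> powr q * t powr b) \<partial>lborel)
       \<le> (\<integral>\<^sup>+t\<in>{0<..}. ennreal (\<bar>D t\<bar> powr q * W t powr q * t powr a) \<partial>lborel)"
proof -
  have P0: "P \<ge> 0" using c1 H P by auto
  have J2: "(\<integral>\<^sup>+t\<in>{0<..}. ennreal (\<bar>D t\<bar> powr q * t powr b) \<partial>lborel)
      = (\<integral>\<^sup>+t\<in>{0<..}. ennreal (gg t powr q * t powr b) \<partial>lborel)"
    by (intro nn_integral_cong) (auto simp: indicator_def D)
  have "ennreal c1 * (\<integral>\<^sup>+t\<in>{0<..}. ennreal (\<bar>G t\<bar> powr q * t powr a) \<partial>lborel)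
      \<le> ennreal c1 * (ennreal H * (\<integral>\<^sup>+t\<in>{0<..}. ennreal (gg t powr q * t powr (a+q)) \<partial>lborel))"
    by (intro mult_left_mono hardy) auto
  also have "\<dots> = ennreal P * (\<integral>\<^sup>+t\<in>{0<..}. ennreal (gg t powr q * t powr (a+q)) \<partial>lborel)"
    using c1 H P by (simp add: ennreal_mult[symmetric] mult.assoc[symmetric])
  finally have I1: "ennreal c1 * (\<integral>\<^sup>+t\<in>{0<..}. ennreal (\<bar>G t\<bar> powr q * t powr a) \<partial>lborel)
      \<le> ennreal P * (\<integral>\<^sup>+t\<in>{0<..}. ennreal (gg t powr q * t powr (a+q)) \<partial>lborel)" .
  have "ennreal P * (\<integral>\<^sup>+t\<in>{0<..}. ennreal (gg t powr q * t powr (a+q)) \<partial>lborel)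
       + ennreal c2 * (\<integral>\<^sup>+t\<in>{0<..}. ennreal (gg t powr q * t powr b) \<partial>lborel)
      = (\<integral>\<^sup>+t. ennreal P * (ennreal (gg t powr q * t powr (a+q)) * indicator {0<..} t)
          + ennreal c2 * (ennreal (gg t powr q * t powr b) * indicator {0<..} t) \<partial>lborel)"
    by (subst nn_integral_add) (auto simp: nn_integral_cmult)
  also have "\<dots> \<le> (\<integral>\<^sup>+t\<in>{0<..}. ennreal (\<bar>D t\<bar> powr q * W t powr q * t powr a) \<partial>lborel)"
  proof (rule nn_integral_mono)
    fix t :: real
    show "ennreal P * (ennreal (gg t powr q * t powr (a+q)) * indicator {0<..} t)
          + ennreal c2 * (ennreal (gg t powr q * t powr b) * indicator {0<..} t)
        \<le> ennreal (\<bar>D t\<bar> powr q * W t powr q * t powr a) * indicator {0<..} t"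
    proof (cases "t > 0")
      case True
      have "gg t powr q * (P * t powr (a+q) + c2 * t powr b) \<le> gg t powr q * (W t powr q * t powr a)"
        using W[OF True] by (intro mult_left_mono) auto
      moreover have "gg t powr q * (P * t powr (a+q) + c2 * t powr b) = P * (gg t powr q * t powr (a+q)) + c2 * (gg t powr q * t powr b)"
        by (simp add: distrib_left mult.left_commute)
      moreover have "gg t powr q * (W t powr q * t powr a) = \<bar>D t\<bar> powr q * W t powr q * t powr a"
        using D[OF True] by (simp add: mult.assoc)
      ultimately have le: "P * (gg t powr q * t powr (a+q)) + c2 * (gg t powr q * t powr b) \<le> \<bar>D t\<bar> powr q * W t powr q * t powr a"
        by simp
      have "ennreal P * ennreal (gg t powr q * t powr (a+q)) + ennreal c2 * ennreal (gg t powr q * t powr b)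
          = ennreal (P * (gg t powr q * t powr (a+q)) + c2 * (gg t powr q * t powr b))"
        using P0 c2 by (simp add: ennreal_mult[symmetric] ennreal_plus[symmetric] del: ennreal_plus)
      also have "\<dots> \<le> ennreal (\<bar>D t\<bar> powr q * W t powr q * t powr a)" using le by (rule ennreal_leI)
      finally show ?thesis using True by simp
    qed simp
  qed
  finally have I2: "ennreal P * (\<integral>\<^sup>+t\<in>{0<..}. ennreal (gg t powr q * t powr (a+q)) \<partial>lborel)
       + ennreal c2 * (\<integral>\<^sup>+t\<in>{0<..}. ennreal (gg t powr q * t powr b) \<partial>lborel)
      \<le> (\<integral>\<^sup>+t\<in>{0<..}. ennreal (\<bar>D t\<bar> powr q * W t powr q * t powr a) \<partial>lborel)" .
  show ?thesis unfolding J2 by (rule order_trans[OF add_mono[OF I1 order_refl] I2])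
qed


locale rearr_setting =
  fixes h :: "'a::euclidean_space \<Rightarrow> real" and M V :: real and K :: "'a set"
  assumes M0: "M \<ge> 0" and hM: "\<And>x. \<bar>h x\<bar> \<le> M"
    and hK: "\<And>x. x \<notin> K \<Longrightarrow> h x = 0"
    and Ksets: "K \<in> sets (hyp_volume :: 'a measure)"
    and KV: "emeasure (hyp_volume :: 'a measure) K = ennreal V" and V0: "V \<ge> 0"
begin

definition S where "S t = {s. s > 0 \<and> emeasure (hyp_volume :: 'a measure) {x. \<bar>h x\<bar> > s} > ennreal t}"

lemma rearr_eq: "rearr h t = (if S t = {} then 0 else Sup (S t))"
  unfolding rearr_def S_def Let_def by (rule refl)

lemma S_le: "s \<in> S t \<Longrightarrow> s \<le> M"
proof (rule ccontr)
  assume s: "s \<in> S t" "\<not> s \<le> M"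
  have "\<bar>h x\<bar> \<le> s" for x using hM[of x] s(2) by linarith
  then have "{x. \<bar>h x\<bar> > s} = {}" by (auto simp: not_less[symmetric])
  then show False using s by (simp add: S_def)
qed

lemma S_pos: "s \<in> S t \<Longrightarrow> s > 0" by (simp add: S_def)

lemma bdd: "bdd_above (S t)" by (meson bdd_aboveI S_le)

lemma rearr_nonneg: "rearr h t \<ge> 0"
proof (cases "S t = {}")
  case False
  then obtain s where "s \<in> S t" by auto
  then have "s \<le> Sup (S t)" using bdd by (intro cSup_upper)
  then show ?thesis using S_pos[OF \<open>s \<in> S t\<close>] False by (simp add: rearr_eq)
qed (simp add: rearr_eq)

lemma rearr_le: "rearr h t \<le> M"
proof (cases "S t = {}")
  case False
  then have "Sup (S t) \<le> M" using S_le by (intro cSup_least) auto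
  then show ?thesis using False by (simp add: rearr_eq)
qed (simp add: rearr_eq M0)

lemma rearr_zero: assumes "t \<ge> V" shows "rearr h t = 0"
proof -
  have "S t = {}"
  proof (rule ccontr)
    assume "S t \<noteq> {}"
    then obtain s where s: "s > 0" "emeasure (hyp_volume :: 'a measure) {x. \<bar>h x\<bar> > s} > ennreal t"
      by (auto simp: S_def)
    have "{x. \<bar>h x\<bar> > s} \<subseteq> K" using hK s(1) by (auto) (metis abs_zero not_less_iff_gr_or_eq)
    then have "emeasure (hyp_volume :: 'a measure) {x. \<bar>h x\<bar> > s} \<le> emeasure hyp_volume K"
      by (rule emeasure_mono[OF _ Ksets])
    also have "\<dots> \<le> ennreal t" using KV assms by (simp add: ennreal_leI)
    finally show False using s(2) by simp
  qed
  then show ?thesis by (simp add: rearr_eq)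
qed

lemma rearr_antimono: assumes "t1 \<le> t2" shows "rearr h t2 \<le> rearr h t1"
proof (cases "S t2 = {}")
  case True then show ?thesis using rearr_nonneg[of t1] by (simp add: rearr_eq)
next
  case False
  have sub: "S t2 \<subseteq> S t1" using assms unfolding S_def
    by (auto intro: le_less_trans[rotated] ennreal_leI)
  then have "S t1 \<noteq> {}" using False by auto
  have "Sup (S t2) \<le> Sup (S t1)" by (rule cSup_subset_mono[OF False bdd sub])
  then show ?thesis using False \<open>S t1 \<noteq> {}\<close> by (simp add: rearr_eq)
qed

lemma mono_neg: "mono (\<lambda>t. - rearr h t)"
  by (auto intro!: monoI rearr_antimono)

lemma rearr_meas: "rearr h \<in> borel_measurable borel"
proof -
  have "(\<lambda>t. - rearr h t) \<in> borel_measurable borel" by (rule borel_measurable_mono[OF mono_neg])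
  then have "(\<lambda>t. - (- rearr h t)) \<in> borel_measurable borel" by measurable
  then show ?thesis by simp
qed

lemma rearr_integrable: "rearr h integrable_on {a..b}"
proof -
  have "(\<lambda>t. - rearr h t) integrable_on {a..b}"
    by (rule integrable_on_mono_on) (use mono_neg in \<open>auto simp: mono_on_def mono_def\<close>)
  then have "(\<lambda>t. - (- rearr h t)) integrable_on {a..b}" by (rule integrable_neg)
  then show ?thesis by simp
qed

lemma int_nonneg: "integral {0..s} (rearr h) \<ge> 0"
  by (rule integral_nonneg[OF rearr_integrable]) (simp add: rearr_nonneg)

lemma int_le_aux: assumes "s \<ge> 0" shows "integral {0..s} (rearr h) \<le> M * s"
proof -
  have "integral {0..s} (rearr h) \<le> integral {0..s} (\<lambda>_. M)"
    by (rule integral_le[OF rearr_integrable]) (auto simp: rearr_le)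
  then show ?thesis using assms by (simp add: mult.commute)
qed

lemma int_le: assumes "s \<ge> 0" shows "integral {0..s} (rearr h) \<le> M * V"
proof (cases "s \<le> V")
  case True
  then show ?thesis using int_le_aux[OF assms] M0 by (meson mult_left_mono order_trans)
next
  case False
  have "integral {0..V} (rearr h) + integral {V..s} (rearr h) = integral {0..s} (rearr h)"
    by (rule Henstock_Kurzweil_Integration.integral_combine[where a=0 and c=V and b=s and f="rearr h"]) (use False V0 rearr_integrable in auto)
  moreover have "integral {V..s} (rearr h) = 0"
  proof -
    have "integral {V..s} (rearr h) = integral {V..s} (\<lambda>_. 0::real)"
      by (rule integral_cong) (simp add: rearr_zero)
    then show ?thesis by simp
  qed
  ultimately show ?thesis using int_le_aux[OF V0] by simp
qed

lemma rearr2_nonneg: "s \<ge> 0 \<Longrightarrow> rearr2 h s \<ge> 0"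
  by (simp add: rearr2_def int_nonneg)

lemma rearr2_le: "s > 0 \<Longrightarrow> rearr2 h s \<le> M * V / s"
  using int_le[of s] by (simp add: rearr2_def divide_right_mono field_simps)

lemma rearr2_cont: assumes "s > 0" shows "isCont (rearr2 h) s"
proof -
  have "continuous_on {0..s+1} (\<lambda>x. integral {0..x} (rearr h))"
    by (rule indefinite_integral_continuous_1[OF rearr_integrable])
  then have "isCont (\<lambda>x. integral {0..x} (rearr h)) s"
    by (rule continuous_on_interior) (use assms in auto)
  then have "isCont (\<lambda>x. (1 / x) * integral {0..x} (rearr h)) s"
    using assms by (intro continuous_intros) auto
  then show ?thesis by (simp add: rearr2_def[abs_def])
qed

end


lemma frechet_zero_local:
  fixes h :: "'a::euclidean_space \<Rightarrow> real"
  assumes "open U" "x \<in> U" "\<And>y. y \<in> U \<Longrightarrow> h y = 0"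
  shows "frechet_derivative h (at x) = (\<lambda>_. 0)"
proof -
  have "((\<lambda>_. 0::real) has_derivative (\<lambda>_. 0)) (at x)" by simp
  then have "(h has_derivative (\<lambda>_. 0)) (at x)"
    by (rule has_derivative_transform_within_open[OF _ assms(1,2)]) (use assms(3) in auto)
  then show ?thesis by (rule frechet_derivative_at[symmetric])
qed

lemma f_zero_outside:
  fixes u :: "'a::euclidean_space \<Rightarrow> real"
  assumes "x \<notin> closure {x. u x \<noteq> 0}"
  shows "hyp_laplacian u x = 0"
proof -
  let ?U = "- closure {x. u x \<noteq> 0}"
  have U: "open ?U" by auto
  have u0: "u y = 0" if "y \<in> ?U" for y
  proof (rule ccontr)
    assume "u y \<noteq> 0"
    then have "y \<in> closure {x. u x \<noteq> 0}" using closure_subset[of "{x. u x \<noteq> 0}"] by auto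
    then show False using that by simp
  qed
  have p1: "iter_partial [i] u y = 0" if "y \<in> ?U" for i y
    using frechet_zero_local[OF U that u0] by simp
  have p2: "iter_partial [i, i] u y = 0" if "y \<in> ?U" for i y
    using frechet_zero_local[OF U that p1] by simp
  have xU: "x \<in> ?U" using assms by simp
  show ?thesis
    unfolding hyp_laplacian_def eucl_laplacian_def by (simp only: p1[OF xU] p2[OF xU]) simp
qed

lemma f_bounded:
  fixes u :: "'a::euclidean_space \<Rightarrow> real"
  assumes "Cc_infty_hyp u"
  shows "\<exists>M\<ge>0. \<forall>x. \<bar>hyp_laplacian u x\<bar> \<le> M"
proof -
  let ?K = "closure {x. u x \<noteq> 0}"
  have sm: "smooth_on hball u" and K: "compact ?K" "?K \<subseteq> hball"
    using assms by (auto simp: Cc_infty_hyp_def)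
  have c1: "continuous_on hball (iter_partial [i] u)" if "i \<in> Basis" for i
  proof -
    have "iter_partial [i] u differentiable_on hball"
      using sm that unfolding smooth_on_def by (auto simp del: iter_partial.simps)
    then show ?thesis by (rule differentiable_imp_continuous_on)
  qed
  have c2: "continuous_on hball (iter_partial [i, i] u)" if "i \<in> Basis" for i
  proof -
    have "iter_partial [i, i] u differentiable_on hball"
      using sm that unfolding smooth_on_def by (auto simp del: iter_partial.simps)
    then show ?thesis by (rule differentiable_imp_continuous_on)
  qed
  let ?g = "\<lambda>x::'a. ((1 - (norm x)\<^sup>2) / 2)\<^sup>2 * (\<Sum>i\<in>Basis. iter_partial [i, i] u x)
       + (real DIM('a) - 2) * ((1 - (norm x)\<^sup>2) / 2) * (\<Sum>i\<in>Basis. (x \<bullet> i) * iter_partial [i] u x)"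
  have cg: "continuous_on hball ?g"
    by (intro continuous_intros continuous_on_sum c1 c2) auto
  have "compact (?g ` ?K)"
    by (rule compact_continuous_image[OF continuous_on_subset[OF cg K(2)] K(1)])
  then have "bounded (?g ` ?K)" by (rule compact_imp_bounded)
  then obtain M where M: "\<forall>y\<in>?g ` ?K. \<bar>y\<bar> \<le> M" by (auto simp: bounded_real)
  have "\<bar>hyp_laplacian u x\<bar> \<le> max M 0" for x
  proof (cases "x \<in> ?K")
    case True
    then have "x \<in> hball" using K by auto
    then have "hyp_laplacian u x = ?g x" by (simp add: hyp_laplacian_def eucl_laplacian_def)
    then show ?thesis using M True by fastforce
  next
    case False
    then show ?thesis using f_zero_outside[OF False] by simp
  qed
  then show ?thesis by (intro exI[of _ "max M 0"]) auto
qed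

lemma K_finite_volume:
  fixes u :: "'a::euclidean_space \<Rightarrow> real"
  assumes "Cc_infty_hyp u"
  shows "emeasure (hyp_volume :: 'a measure) (closure {x. u x \<noteq> 0}) < \<infinity>"
proof -
  let ?K = "closure {x. u x \<noteq> 0}"
  have K: "compact ?K" "?K \<subseteq> hball"
    using assms by (auto simp: Cc_infty_hyp_def)
  obtain r where r: "r < 1" "r \<ge> 0" "\<And>x. x \<in> ?K \<Longrightarrow> norm x \<le> r"
  proof (cases "?K = {}")
    case True then show ?thesis using that[of 0] by auto
  next
    case False
    have "compact (norm ` ?K)" by (intro compact_continuous_image continuous_intros K(1))
    then obtain s where s: "s \<in> norm ` ?K" "\<forall>t\<in>norm ` ?K. t \<le> s"
      using compact_attains_sup[of "norm ` ?K"] False by auto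
    then have "s < 1" using K(2) by auto
    then show ?thesis using that[of s] s by auto
  qed
  define c where "c = (2 / (1 - r\<^sup>2)) ^ DIM('a)"
  have r2: "r\<^sup>2 < 1" using r by (simp add: power_less_one_iff abs_square_less_1)
  have [measurable]: "hball \<in> sets (borel :: 'a measure)" by simp
  have [measurable]: "(\<lambda>x::'a. norm x) \<in> borel_measurable borel"
    by (intro borel_measurable_continuous_onI continuous_intros)
  have dm: "(\<lambda>x::'a. indicator hball x * ennreal ((2 / (1 - (norm x)\<^sup>2)) ^ DIM('a))) \<in> borel_measurable lborel"
    by measurable
  have Km: "?K \<in> sets lborel" by simp
  have "emeasure (hyp_volume :: 'a measure) ?K = (\<integral>\<^sup>+ x. indicator hball x * ennreal ((2 / (1 - (norm x)\<^sup>2)) ^ DIM('a)) * indicator ?K x \<partial>lborel)"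
    unfolding hyp_volume_def by (rule emeasure_density[OF dm Km])
  also have "\<dots> \<le> (\<integral>\<^sup>+ x. ennreal c * indicator ?K x \<partial>lborel)"
  proof (rule nn_integral_mono)
    fix x :: 'a
    show "indicator hball x * ennreal ((2 / (1 - (norm x)\<^sup>2)) ^ DIM('a)) * indicator ?K x \<le> ennreal c * indicator ?K x"
    proof (cases "x \<in> ?K")
      case True
      then have nx: "norm x \<le> r" "x \<in> hball" using r K by auto
      have "(norm x)\<^sup>2 \<le> r\<^sup>2" using nx r by (intro power_mono) auto
      then have "2 / (1 - (norm x)\<^sup>2) \<le> 2 / (1 - r\<^sup>2)" using r2
        by (intro divide_left_mono) (auto simp: mult_pos_pos)
      moreover have "0 \<le> 2 / (1 - (norm x)\<^sup>2)" using nx by (simp add: power_le_one_iff)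
      ultimately have "(2 / (1 - (norm x)\<^sup>2)) ^ DIM('a) \<le> c" unfolding c_def by (intro power_mono) auto
      then show ?thesis using True nx by (simp add: indicator_def ennreal_leI)
    qed simp
  qed
  also have "\<dots> = ennreal c * emeasure lborel ?K"
    by (simp add: nn_integral_cmult_indicator)
  also have "\<dots> < \<infinity>"
    using emeasure_bounded_finite[OF compact_imp_bounded[OF K(1)]] by (simp add: ennreal_mult_less_top)
  finally show ?thesis .
qed


locale vsetting =
  fixes g :: "real \<Rightarrow> real" and C :: real
  assumes gc: "\<And>s. s > 0 \<Longrightarrow> isCont g s"
    and gnn: "\<And>s. s > 0 \<Longrightarrow> g s \<ge> 0"
    and gb: "\<And>s. s > 0 \<Longrightarrow> g s \<le> C / s\<^sup>2"
    and C0: "C \<ge> 0"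
begin

definition g0 where "g0 s = (if s \<in> {0<..} then g s else 0)"

lemma g0_meas[measurable]: "g0 \<in> borel_measurable borel"
proof -
  have "continuous_on {0<..} g" using gc by (intro continuous_at_imp_continuous_on) auto
  then have "(\<lambda>s. if s \<in> {0<..} then g s else 0) \<in> borel_measurable borel"
    by (intro borel_measurable_continuous_on_if) auto
  then show ?thesis by (simp add: g0_def[abs_def])
qed

lemma g0_nn: "g0 s \<ge> 0" by (simp add: g0_def gnn)

lemma g0_eq: "s > 0 \<Longrightarrow> g0 s = g s" by (simp add: g0_def)

lemma set_int: assumes t: "t > 0" shows "set_integrable lborel {t..} g"
proof -
  have eq: "(\<lambda>x. indicator {t..} x *\<^sub>R g x) = (\<lambda>x. indicator {t..} x * g0 x)"
    using t by (auto simp: fun_eq_iff indicator_def g0_def)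
  have "integrable lborel (\<lambda>x. indicator {t..} x * g0 x)"
  proof (rule integrableI_bounded)
    show "(\<lambda>x. indicator {t..} x * g0 x) \<in> borel_measurable lborel" by measurable
    have "(\<integral>\<^sup>+x. ennreal (norm (indicator {t..} x * g0 x)) \<partial>lborel)
        \<le> (\<integral>\<^sup>+x. ennreal C * ennreal (indicator {t..} x * x powr (-(1+1))) \<partial>lborel)"
    proof (rule nn_integral_mono)
      fix x :: real
      show "ennreal (norm (indicator {t..} x * g0 x)) \<le> ennreal C * ennreal (indicator {t..} x * x powr (-(1+1)))"
      proof (cases "t \<le> x")
        case True
        then have x: "x > 0" using t by simp
        have "g x \<le> C * x powr (-(1+1))"
          using gb[OF x] x by (simp add: powr_minus divide_inverse power2_eq_square powr_add)
        then show ?thesis using True x gnn[OF x] C0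
          by (simp add: g0_eq ennreal_mult[symmetric] ennreal_leI)
      qed simp
    qed
    also have "\<dots> = ennreal C * ennreal (t powr (-1) / 1)"
      by (subst nn_integral_cmult) (auto simp: nn_powr_tail[OF t, of 1, simplified])
    also have "\<dots> < \<infinity>" by (simp add: ennreal_mult_less_top)
    finally show "(\<integral>\<^sup>+x. ennreal (norm (indicator {t..} x * g0 x)) \<partial>lborel) < \<infinity>" .
  qed
  then show ?thesis unfolding set_integrable_def eq .
qed

lemma set_int': assumes t: "t > 0" and "A \<subseteq> {t..}" "A \<in> sets lborel"
  shows "set_integrable lborel A g"
  by (rule set_integrable_subset[OF set_int[OF t]]) (use assms in auto)

definition v where "v t = (LINT s:{t<..}|lborel. g s)"

lemma v_nn: assumes t: "t > 0" shows "ennreal (v t) = (\<integral>\<^sup>+s\<in>{t<..}. ennreal (g s) \<partial>lborel)"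
proof -
  have I: "integrable lborel (\<lambda>x. indicator {t<..} x *\<^sub>R g x)"
  proof -
    have "{t<..} \<subseteq> {t..}" by auto
    then show ?thesis using set_int'[OF t, of "{t<..}"] by (simp add: set_integrable_def)
  qed
  have "(\<integral>\<^sup>+s. ennreal (indicator {t<..} s *\<^sub>R g s) \<partial>lborel) = ennreal (integral\<^sup>L lborel (\<lambda>x. indicator {t<..} x *\<^sub>R g x))"
    by (rule nn_integral_eq_integral[OF I]) (use t gnn in \<open>auto simp: indicator_def\<close>)
  moreover have "(\<integral>\<^sup>+s. ennreal (indicator {t<..} s *\<^sub>R g s) \<partial>lborel) = (\<integral>\<^sup>+s\<in>{t<..}. ennreal (g s) \<partial>lborel)"
    by (intro nn_integral_cong) (auto simp: indicator_def)
  ultimately show ?thesis by (simp add: v_def set_lebesgue_integral_def)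
qed

lemma v_deriv: assumes t: "t > 0" shows "(v has_real_derivative - g t) (at t)"
proof -
  define a where "a = t / 2"
  have a: "a > 0" "a < t" using t by (auto simp: a_def)
  define c0 where "c0 = (LINT s:{a..}|lborel. g s)"
  have eq: "v x = c0 - integral {a..x} g" if x: "x \<in> {a<..}" for x
  proof -
    have "{a..} = {a..x} \<union> {x<..}" using x by auto
    then have "c0 = (LINT s:{a..x}|lborel. g s) + (LINT s:{x<..}|lborel. g s)"
      unfolding c0_def
      by (simp only:) (rule set_integral_Un, auto intro!: set_int'[OF a(1)])
    moreover have "(LINT s:{a..x}|lborel. g s) = integral {a..x} g"
      by (rule set_borel_integral_eq_integral(2)) (rule set_int'[OF a(1)], auto)
    ultimately show ?thesis by (simp add: v_def)
  qed
  have cg: "continuous_on {a..2*t} g" using a gc by (intro continuous_at_imp_continuous_on) auto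
  have "((\<lambda>x. integral {a..x} g) has_real_derivative g t) (at t within {a..2*t})"
    by (rule integral_has_real_derivative[OF cg]) (use a t in auto)
  moreover have "at t within {a..2*t} = at t" using a t by (intro at_within_Icc_at) auto
  ultimately have "((\<lambda>x. integral {a..x} g) has_real_derivative g t) (at t)" by simp
  then have "((\<lambda>x. c0 - integral {a..x} g) has_real_derivative - g t) (at t)"
    by (auto intro!: derivative_eq_intros)
  then show ?thesis
    by (rule has_field_derivative_transform_within_open[of _ _ _ "{a<..}"]) (use a eq in auto)
qed

lemma deriv_v: "t > 0 \<Longrightarrow> deriv v t = - g t"
  using v_deriv by (rule DERIV_imp_deriv)

lemma v_le: assumes t: "t > 0" shows "ennreal \<bar>v t\<bar> \<le> (\<integral>\<^sup>+s\<in>{t<..}. ennreal (g0 s) \<partial>lborel)"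
proof -
  have "v t \<ge> 0"
  proof -
    have "ennreal (v t) = (\<integral>\<^sup>+s\<in>{t<..}. ennreal (g s) \<partial>lborel)" by (rule v_nn[OF t])
    have "0 \<le> v t" unfolding v_def set_lebesgue_integral_def
      by (rule integral_nonneg_AE) (use t gnn in \<open>auto simp: indicator_def\<close>)
    then show ?thesis .
  qed
  then have "ennreal \<bar>v t\<bar> = (\<integral>\<^sup>+s\<in>{t<..}. ennreal (g s) \<partial>lborel)" using v_nn[OF t] by simp
  also have "\<dots> = (\<integral>\<^sup>+s\<in>{t<..}. ennreal (g0 s) \<partial>lborel)"
    by (intro nn_integral_cong) (use t in \<open>auto simp: indicator_def g0_eq\<close>)
  finally show ?thesis by simp
qed

end


lemma hypF_Finv: "hypF TYPE('a::euclidean_space) = Finv DIM('a) (sigma_n TYPE('a))"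
  by (simp add: fun_eq_iff hypF_def Finv_def Phi_def)

lemma W_shift:
  fixes n t q c2 c a b X :: real
  assumes t: "t > 0" and n: "n \<ge> 1" and c2: "c2 \<ge> 0"
    and le: "((n - 1) * t) powr q + c2 * t powr c \<le> X" and ab: "a + c = b"
  shows "(n - 1) powr q * t powr (a + q) + c2 * t powr b \<le> X * t powr a"
proof -
  have L: "(((n - 1) * t) powr q + c2 * t powr c) * t powr a \<le> X * t powr a"
    using le t by (intro mult_right_mono) auto
  moreover have "((n - 1) * t) powr q = (n - 1) powr q * t powr q" using n t by (subst powr_mult) auto
  moreover have "t powr (a + q) = t powr a * t powr q" "t powr b = t powr c * t powr a"
    using ab[symmetric] by (simp_all add: powr_add mult.commute)
  ultimately have "(((n - 1) * t) powr q + c2 * t powr c) * t powr a = (n - 1) powr q * t powr (a + q) + c2 * t powr b"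
    by (simp add: algebra_simps)
  with L show ?thesis by linarith
qed

theorem proposition2p7:
  fixes u :: "'a::euclidean_space \<Rightarrow> real" and p q :: real
  defines "n \<equiv> real DIM('a)"
  defines "\<sigma> \<equiv> sigma_n TYPE('a)"
  defines "F \<equiv> hypF TYPE('a)"
  defines "f \<equiv> (\<lambda>x. - hyp_laplacian u x)"
  defines "w \<equiv> (\<lambda>s. n * \<sigma> * sinh (F s) ^ (DIM('a) - 1))"
  defines "v \<equiv> (\<lambda>t. LINT s:{t<..}|lborel. s * rearr2 f s / (w s)\<^sup>2)"
  assumes "DIM('a) \<ge> 2" and "1 < p" and "p < n" and "q \<ge> 2 * n / (n - 1)"
    and "Cc_infty_hyp u"
  shows "(\<integral>\<^sup>+ t\<in>{0<..}. ennreal (\<bar>deriv v t\<bar> powr q * (w t) powr q * t powr (q / p - 1)) \<partial>lborel)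
         \<ge> ennreal (((n - 1) / p) powr q)
             * (\<integral>\<^sup>+ t\<in>{0<..}. ennreal (\<bar>v t\<bar> powr q * t powr (q / p - 1)) \<partial>lborel)
           + ennreal (n powr q * \<sigma> powr (q / n))
             * (\<integral>\<^sup>+ t\<in>{0<..}. ennreal (\<bar>deriv v t\<bar> powr q * t powr (q * (1/p - 1/n) + q - 1)) \<partial>lborel)
    \<and> (\<integral>\<^sup>+ t\<in>{0<..}. ennreal (\<bar>deriv v t\<bar> powr q * (w t) powr q * t powr (q * (1/p - 1/n) - 1)) \<partial>lborel)
         \<ge> ennreal (((n - 1) * (n - p) / (n * p)) powr q)
             * (\<integral>\<^sup>+ t\<in>{0<..}. ennreal (\<bar>v t\<bar> powr q * t powr (q * (1/p - 1/n) - 1)) \<partial>lborel)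
           + ennreal (n powr q * \<sigma> powr (q / n))
             * (\<integral>\<^sup>+ t\<in>{0<..}. ennreal (\<bar>deriv v t\<bar> powr q * t powr (q * (1/p - 2/n) + q - 1)) \<partial>lborel)"
proof -
  note A = assms
  define N where "N = DIM('a)"
  have N2: "N \<ge> 2" using A(7) by (simp add: N_def)
  have nN: "n = real N" by (simp add: n_def N_def)
  have n2: "n \<ge> 2" using N2 nN by simp
  have p1: "p > 1" and pn: "p < n" using A by auto
  have q: "q \<ge> 2 * real N / (real N - 1)" using A(10) nN by simp
  have q2: "q > 1"
  proof -
    have "2 * n / (n - 1) \<ge> 2" using n2 by (simp add: field_simps)
    then show ?thesis using A(10) by simp
  qed
  have \<sigma>0: "\<sigma> > 0" by (simp add: \<sigma>_def sigma_n_def content_ball_pos)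
  have FF: "F = Finv N \<sigma>" by (simp add: F_def N_def \<sigma>_def hypF_Finv)
  define K where "K = closure {x. u x \<noteq> 0}"
  obtain M where M0: "M \<ge> 0" and fM: "\<And>x. \<bar>f x\<bar> \<le> M"
    using f_bounded[OF A(11)] by (auto simp: f_def)
  have fK: "\<And>x. x \<notin> K \<Longrightarrow> f x = 0" using f_zero_outside by (simp add: f_def K_def)
  have Kfin: "emeasure (hyp_volume :: 'a measure) K < \<infinity>" using K_finite_volume[OF A(11)] by (simp add: K_def)
  then obtain V where KV: "emeasure (hyp_volume :: 'a measure) K = ennreal V" and V0: "V \<ge> 0"
    by (cases "emeasure (hyp_volume :: 'a measure) K") auto
  have Ksets: "K \<in> sets (hyp_volume :: 'a measure)"
    by (simp add: hyp_volume_def K_def)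
  interpret R: rearr_setting f M V K
    by unfold_locales (use M0 fM fK Ksets KV V0 in auto)
  have wF: "w s = real N * \<sigma> * sinh (Finv N \<sigma> s) ^ (N - 1)" for s
    by (simp add: w_def FF nN N_def)
  have w_lb: "w s \<ge> (n - 1) * s" if s: "s > 0" for s
  proof -
    define \<rho> where "\<rho> = Finv N \<sigma> s"
    have \<rho>0: "\<rho> \<ge> 0" and t\<rho>: "real N * \<sigma> * Phi N \<rho> = s"
      using Finv_props[OF N2 \<sigma>0 less_imp_le[OF s]] by (auto simp: \<rho>_def)
    have "(real N - 1) * Phi N \<rho> \<le> sinh \<rho> ^ (N - 1)" using step1[OF N2 \<rho>0] by simp
    then have "real N * \<sigma> * ((real N - 1) * Phi N \<rho>) \<le> real N * \<sigma> * sinh \<rho> ^ (N - 1)"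
      using \<sigma>0 by (intro mult_left_mono) auto
    moreover have "real N * \<sigma> * ((real N - 1) * Phi N \<rho>) = (n - 1) * s"
      using t\<rho> nN by (simp add: algebra_simps)
    ultimately show ?thesis by (simp add: wF \<rho>_def)
  qed
  have w_pos: "w s > 0" if "s > 0" for s
  proof -
    have "(n - 1) * s > 0" using that n2 by simp
    then show ?thesis using w_lb[OF that] by simp
  qed
  have w_cont: "isCont w s" if "s > 0" for s
  proof -
    have "isCont (Finv N \<sigma>) s" by (rule Finv_cont[OF N2 \<sigma>0 that])
    then have "isCont (\<lambda>s. real N * \<sigma> * sinh (Finv N \<sigma> s) ^ (N - 1)) s"
      by (intro continuous_intros) (auto intro: isCont_o2[of _ sinh] )
    then show ?thesis by (simp add: wF[abs_def])
  qed
  define g where "g s = s * rearr2 f s / (w s)\<^sup>2" for s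
  define C where "C = M * V / (n - 1)\<^sup>2"
  have C0: "C \<ge> 0" using M0 V0 by (simp add: C_def)
  have g_cont: "isCont g s" if "s > 0" for s
    unfolding g_def[abs_def] using that w_pos[OF that]
    by (intro continuous_intros R.rearr2_cont w_cont) auto
  have g_nn: "g s \<ge> 0" if "s > 0" for s
    using that R.rearr2_nonneg[of s] by (simp add: g_def)
  have g_le: "g s \<le> C / s\<^sup>2" if s: "s > 0" for s
  proof -
    have r1: "s * rearr2 f s \<le> M * V" using R.rearr2_le[OF s] s by (simp add: field_simps)
    have r0: "s * rearr2 f s \<ge> 0" using R.rearr2_nonneg[of s] s by simp
    have n1s: "(n - 1) * s > 0" using n2 s by simp
    have ww: "((n - 1) * s)\<^sup>2 \<le> (w s)\<^sup>2" using w_lb[OF s] n1s by (intro power_mono) auto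
    have "g s \<le> M * V / ((n - 1) * s)\<^sup>2"
      unfolding g_def by (rule frac_le) (use r0 r1 n1s ww M0 V0 in auto)
    also have "\<dots> = C / s\<^sup>2" using s n2 by (simp add: C_def power_mult_distrib)
    finally show ?thesis .
  qed
  interpret VV: vsetting g C
    by unfold_locales (use g_cont g_nn g_le C0 in auto)
  have vv: "v = VV.v" by (simp add: fun_eq_iff v_def VV.v_def g_def)
  have Dv: "\<bar>deriv v t\<bar> = VV.g0 t" if "t > 0" for t
    using VV.deriv_v[OF that] that g_nn[OF that] by (simp add: vv VV.g0_eq)
  have Wb: "((n - 1) * t) powr q + (n powr q * \<sigma> powr (q / n)) * t powr (q * (n - 1) / n) \<le> w t powr q"
    if "t > 0" for t
    using w_ineq[OF N2 \<sigma>0 that q] by (simp add: wF nN)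
  have c2: "n powr q * \<sigma> powr (q / n) \<ge> 0" by simp
  have I1: "ennreal (((n - 1) / p) powr q)
             * (\<integral>\<^sup>+ t\<in>{0<..}. ennreal (\<bar>v t\<bar> powr q * t powr (q / p - 1)) \<partial>lborel)
           + ennreal (n powr q * \<sigma> powr (q / n))
             * (\<integral>\<^sup>+ t\<in>{0<..}. ennreal (\<bar>deriv v t\<bar> powr q * t powr (q * (1/p - 1/n) + q - 1)) \<partial>lborel)
        \<le> (\<integral>\<^sup>+ t\<in>{0<..}. ennreal (\<bar>deriv v t\<bar> powr q * (w t) powr q * t powr (q / p - 1)) \<partial>lborel)"
  proof (rule assemble[where gg = VV.g0 and H = "p powr q" and P = "(n - 1) powr q"])
    show "VV.g0 \<in> borel_measurable borel" by (rule VV.g0_meas)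
    show "\<And>s. VV.g0 s \<ge> 0" by (rule VV.g0_nn)
    show "\<And>t. t > 0 \<Longrightarrow> \<bar>deriv v t\<bar> = VV.g0 t" by (rule Dv)
    have "(\<integral>\<^sup>+t\<in>{0<..}. ennreal (\<bar>v t\<bar> powr q * t powr (q / p - 1)) \<partial>lborel)
        \<le> ennreal ((q / ((q / p - 1) + 1)) powr q) * (\<integral>\<^sup>+t\<in>{0<..}. ennreal (VV.g0 t powr q * t powr ((q / p - 1) + q)) \<partial>lborel)"
      by (rule hardy[OF q2]) (use p1 q2 VV.v_le in \<open>auto simp: vv VV.g0_nn\<close>)
    moreover have "q / ((q / p - 1) + 1) = p" using p1 q2 by simp
    ultimately show "(\<integral>\<^sup>+t\<in>{0<..}. ennreal (\<bar>v t\<bar> powr q * t powr (q / p - 1)) \<partial>lborel)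
        \<le> ennreal (p powr q) * (\<integral>\<^sup>+t\<in>{0<..}. ennreal (VV.g0 t powr q * t powr ((q / p - 1) + q)) \<partial>lborel)"
      by simp
    show "((n - 1) / p) powr q \<ge> 0" "p powr q \<ge> 0" by auto
    show "((n - 1) / p) powr q * p powr q = (n - 1) powr q"
      using p1 n2 by (simp add: powr_divide)
    show "n powr q * \<sigma> powr (q / n) \<ge> 0" by simp
    fix t :: real assume t: "t > 0"
    show "(n - 1) powr q * t powr (q / p - 1 + q) + n powr q * \<sigma> powr (q / n) * t powr (q * (1/p - 1/n) + q - 1)
        \<le> w t powr q * t powr (q / p - 1)"
      by (rule W_shift[OF t _ c2 Wb[OF t]]) (use n2 in \<open>auto simp: field_simps\<close>)
  qed
  have I2: "ennreal (((n - 1) * (n - p) / (n * p)) powr q)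
             * (\<integral>\<^sup>+ t\<in>{0<..}. ennreal (\<bar>v t\<bar> powr q * t powr (q * (1/p - 1/n) - 1)) \<partial>lborel)
           + ennreal (n powr q * \<sigma> powr (q / n))
             * (\<integral>\<^sup>+ t\<in>{0<..}. ennreal (\<bar>deriv v t\<bar> powr q * t powr (q * (1/p - 2/n) + q - 1)) \<partial>lborel)
        \<le> (\<integral>\<^sup>+ t\<in>{0<..}. ennreal (\<bar>deriv v t\<bar> powr q * (w t) powr q * t powr (q * (1/p - 1/n) - 1)) \<partial>lborel)"
  proof (rule assemble[where gg = VV.g0 and H = "(n * p / (n - p)) powr q" and P = "(n - 1) powr q"])
    show "VV.g0 \<in> borel_measurable borel" by (rule VV.g0_meas)
    show "\<And>s. VV.g0 s \<ge> 0" by (rule VV.g0_nn)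
    show "\<And>t. t > 0 \<Longrightarrow> \<bar>deriv v t\<bar> = VV.g0 t" by (rule Dv)
    have a1: "q * (1/p - 1/n) - 1 + 1 = q * (n - p) / (n * p)" using p1 n2 by (simp add: field_simps)
    have a0: "q * (n - p) / (n * p) > 0" using p1 pn n2 q2 by simp
    have "(\<integral>\<^sup>+t\<in>{0<..}. ennreal (\<bar>v t\<bar> powr q * t powr (q * (1/p - 1/n) - 1)) \<partial>lborel)
        \<le> ennreal ((q / ((q * (1/p - 1/n) - 1) + 1)) powr q) * (\<integral>\<^sup>+t\<in>{0<..}. ennreal (VV.g0 t powr q * t powr ((q * (1/p - 1/n) - 1) + q)) \<partial>lborel)"
      by (rule hardy[OF q2]) (use a1 a0 VV.v_le in \<open>auto simp: vv VV.g0_nn\<close>)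
    moreover have "q / ((q * (1/p - 1/n) - 1) + 1) = n * p / (n - p)" unfolding a1 using p1 pn n2 q2 by (simp add: field_simps)
    ultimately show "(\<integral>\<^sup>+t\<in>{0<..}. ennreal (\<bar>v t\<bar> powr q * t powr (q * (1/p - 1/n) - 1)) \<partial>lborel)
        \<le> ennreal ((n * p / (n - p)) powr q) * (\<integral>\<^sup>+t\<in>{0<..}. ennreal (VV.g0 t powr q * t powr ((q * (1/p - 1/n) - 1) + q)) \<partial>lborel)"
      by simp
    show "((n - 1) * (n - p) / (n * p)) powr q \<ge> 0" "(n * p / (n - p)) powr q \<ge> 0" by auto
    show "((n - 1) * (n - p) / (n * p)) powr q * (n * p / (n - p)) powr q = (n - 1) powr q"
    proof -
      have "((n - 1) * (n - p) / (n * p)) powr q * (n * p / (n - p)) powr q = ((n - 1) * (n - p) / (n * p) * (n * p / (n - p))) powr q"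
        using p1 pn n2 by (subst powr_mult) auto
      also have "(n - 1) * (n - p) / (n * p) * (n * p / (n - p)) = n - 1" using p1 pn n2 by (simp add: field_simps)
      finally show ?thesis .
    qed
    show "n powr q * \<sigma> powr (q / n) \<ge> 0" by simp
    fix t :: real assume t: "t > 0"
    show "(n - 1) powr q * t powr (q * (1/p - 1/n) - 1 + q) + n powr q * \<sigma> powr (q / n) * t powr (q * (1/p - 2/n) + q - 1)
        \<le> w t powr q * t powr (q * (1/p - 1/n) - 1)"
      by (rule W_shift[OF t _ c2 Wb[OF t]]) (use n2 in \<open>auto simp: field_simps\<close>)
  qed
  show ?thesis using I1 I2 by simp
qed


end
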